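(* Let $(A,\mu,\Delta,\alpha,\beta,\psi,\omega)$ be an infinitesimal BiHom-bialgebra, with notation $\mu(a\otimes b)=a\cdot b$ and $\Delta(a)=a_1\otimes a_2$. Define a new multiplication on $A$ by \[ a\ast b=\alpha\beta^{2}\psi(b_{1})\cdot\big[\alpha(a)\cdot\alpha^{2}\omega(b_{2})\big]=\big[\beta^{2}\psi(b_{1})\cdot\alpha(a)\big]\cdot\alpha^{2}\beta\omega(b_{2}),\qquad a,b\in A. \] Then $(A,\ast,\alpha^{2}\beta,\alpha^{2}\beta^{2}\psi\omega)$ is a left BiHom-pre-Lie algebra.
   Context: Work over a field $\Bbbk$. A BiHom-associative algebra is a 4-tuple $(A,\mu,\alpha,\beta)$ with $A$ a linear space, $\mu:A\otimes A\to A$ (written $x\cdot y$) and $\alpha,\beta:A\to A$ linear maps such that $\alpha\beta=\beta\alpha$, $\alpha(x\cdot y)=\alpha(x)\cdot\alpha(y)$, $\beta(x\cdot y)=\beta(x)\cdot\beta(y)$ and $\alpha(x)\cdot(y\cdot z)=(x\cdot y)\cdot\beta(z)$ for all $x,y,z$. A BiHom-coassociative coalgebra is a 4-tuple $(C,\Delta,\psi,\omega)$ with $\Delta:C\to C\otimes C$ and $\psi,\omega:C\to C$ linear, $\psi\omega=\omega\psi$, $(\psi\otimes\psi)\Delta=\Delta\psi$, $(\omega\otimes\omega)\Delta=\Delta\omega$ and $(\Delta\otimes\psi)\Delta=(\omega\otimes\Delta)\Delta$. An infinitesimal BiHom-bialgebra is a 7-tuple $(A,\mu,\Delta,\alpha,\beta,\psi,\omega)$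 such that $(A,\mu,\alpha,\beta)$ is a BiHom-associative algebra, $(A,\Delta,\psi,\omega)$ is a BiHom-coassociative coalgebra, and for all $a,b\in A$: $\Delta(a\cdot b)=\omega(a)\cdot b_1\otimes\beta(b_2)+\alpha(a_1)\otimes a_2\cdot\psi(b)$; $\alpha\psi=\psi\alpha$, $\alpha\omega=\omega\alpha$, $\beta\psi=\psi\beta$, $\beta\omega=\omega\beta$; $(\alpha\otimes\alpha)\Delta=\Delta\alpha$, $(\beta\otimes\beta)\Delta=\Delta\beta$; $\psi(a\cdot b)=\psi(a)\cdot\psi(b)$, $\omega(a\cdot b)=\omega(a)\cdot\omega(b)$. A left BiHom-pre-Lie algebra is a 4-tuple $(A,\mu,\alpha,\beta)$ with $\alpha\beta=\beta\alpha$, $\alpha,\beta$ multiplicative for $\mu$, and $\alpha\beta(x)\cdot(\alpha(y)\cdot z)-(\beta(x)\cdot\alpha(y))\cdot\beta(z)=\alpha\beta(y)\cdot(\alpha(x)\cdot z)-(\beta(y)\cdot\alpha(x))\cdot\beta(z)$ for all $x,y,z$. Algebras and coalgebras are not assumed (co)unital. *)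

theory Defs
  imports Complex_Main
begin

text \<open>Elements of A\<otimes>A are represented by finite lists of pairs (x_i,y_i),
  standing for the sum of x_i\<otimes>y_i; elements of A\<otimes>A\<otimes>A by lists of triples.
  Two such representations denote the same tensor iff they agree under
  every bilinear (resp. trilinear) form into k (true over a field).\<close>

definition lin :: "('k::field \<Rightarrow> 'a::ab_group_add \<Rightarrow> 'a) \<Rightarrow> ('a \<Rightarrow> 'a) \<Rightarrow> bool" where
  "lin scale f \<longleftrightarrow> Vector_Spaces.linear scale scale f"

definition lin_form :: "('k::field \<Rightarrow> 'a::ab_group_add \<Rightarrow> 'a) \<Rightarrow> ('a \<Rightarrow> 'k) \<Rightarrow> bool" where
  "lin_form scale f \<longleftrightarrow> Vector_Spaces.linear scale (*) f"

definition bilin_form :: "('k::field \<Rightarrow> 'a::ab_group_add \<Rightarrow> 'a) \<Rightarrow> ('a \<Rightarrow> 'a \<Rightarrow> 'k) \<Rightarrow> bool" where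
  "bilin_form scale \<phi> \<longleftrightarrow> (\<forall>x. lin_form scale (\<phi> x)) \<and> (\<forall>y. lin_form scale (\<lambda>x. \<phi> x y))"

definition trilin_form :: "('k::field \<Rightarrow> 'a::ab_group_add \<Rightarrow> 'a) \<Rightarrow> ('a \<Rightarrow> 'a \<Rightarrow> 'a \<Rightarrow> 'k) \<Rightarrow> bool" where
  "trilin_form scale \<phi> \<longleftrightarrow> (\<forall>y z. lin_form scale (\<lambda>x. \<phi> x y z)) \<and>
     (\<forall>x z. lin_form scale (\<lambda>y. \<phi> x y z)) \<and> (\<forall>x y. lin_form scale (\<lambda>z. \<phi> x y z))"

definition bilin_map :: "('k::field \<Rightarrow> 'a::ab_group_add \<Rightarrow> 'a) \<Rightarrow> ('a \<Rightarrow> 'a \<Rightarrow> 'a) \<Rightarrow> bool" where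
  "bilin_map scale m \<longleftrightarrow> (\<forall>x. lin scale (m x)) \<and> (\<forall>y. lin scale (\<lambda>x. m x y))"

definition teq2 :: "('k::field \<Rightarrow> 'a::ab_group_add \<Rightarrow> 'a) \<Rightarrow> ('a \<times> 'a) list \<Rightarrow> ('a \<times> 'a) list \<Rightarrow> bool" where
  "teq2 scale s t \<longleftrightarrow> (\<forall>\<phi>. bilin_form scale \<phi> \<longrightarrow>
     (\<Sum>(x,y)\<leftarrow>s. \<phi> x y) = (\<Sum>(x,y)\<leftarrow>t. \<phi> x y))"

definition teq3 :: "('k::field \<Rightarrow> 'a::ab_group_add \<Rightarrow> 'a) \<Rightarrow> ('a \<times> 'a \<times> 'a) list \<Rightarrow> ('a \<times> 'a \<times> 'a) list \<Rightarrow> bool" where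
  "teq3 scale s t \<longleftrightarrow> (\<forall>\<phi>. trilin_form scale \<phi> \<longrightarrow>
     (\<Sum>(x,y,z)\<leftarrow>s. \<phi> x y z) = (\<Sum>(x,y,z)\<leftarrow>t. \<phi> x y z))"

definition lin_comult :: "('k::field \<Rightarrow> 'a::ab_group_add \<Rightarrow> 'a) \<Rightarrow> ('a \<Rightarrow> ('a \<times> 'a) list) \<Rightarrow> bool" where
  "lin_comult scale D \<longleftrightarrow> (\<forall>c x y. teq2 scale (D (scale c x + y))
      (map (\<lambda>(u,v). (scale c u, v)) (D x) @ D y))"

definition tmap2 :: "('a \<Rightarrow> 'a) \<Rightarrow> ('a \<Rightarrow> 'a) \<Rightarrow> ('a \<times> 'a) list \<Rightarrow> ('a \<times> 'a) list" where
  "tmap2 f g s = map (\<lambda>(x,y). (f x, g y)) s"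

definition BiHom_assoc_algebra ::
  "('k::field \<Rightarrow> 'a::ab_group_add \<Rightarrow> 'a) \<Rightarrow> ('a \<Rightarrow> 'a \<Rightarrow> 'a) \<Rightarrow> ('a \<Rightarrow> 'a) \<Rightarrow> ('a \<Rightarrow> 'a) \<Rightarrow> bool" where
  "BiHom_assoc_algebra scale m \<alpha> \<beta> \<longleftrightarrow>
     vector_space scale \<and> bilin_map scale m \<and> lin scale \<alpha> \<and> lin scale \<beta> \<and>
     \<alpha> \<circ> \<beta> = \<beta> \<circ> \<alpha> \<and>
     (\<forall>x y. \<alpha> (m x y) = m (\<alpha> x) (\<alpha> y)) \<and>
     (\<forall>x y. \<beta> (m x y) = m (\<beta> x) (\<beta> y)) \<and>
     (\<forall>x y z. m (\<alpha> x) (m y z) = m (m x y) (\<beta> z))"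

definition BiHom_coassoc_coalgebra ::
  "('k::field \<Rightarrow> 'a::ab_group_add \<Rightarrow> 'a) \<Rightarrow> ('a \<Rightarrow> ('a \<times> 'a) list) \<Rightarrow> ('a \<Rightarrow> 'a) \<Rightarrow> ('a \<Rightarrow> 'a) \<Rightarrow> bool" where
  "BiHom_coassoc_coalgebra scale D \<psi> \<omega> \<longleftrightarrow>
     vector_space scale \<and> lin_comult scale D \<and> lin scale \<psi> \<and> lin scale \<omega> \<and>
     \<psi> \<circ> \<omega> = \<omega> \<circ> \<psi> \<and>
     (\<forall>a. teq2 scale (tmap2 \<psi> \<psi> (D a)) (D (\<psi> a))) \<and>
     (\<forall>a. teq2 scale (tmap2 \<omega> \<omega> (D a)) (D (\<omega> a))) \<and>
     (\<forall>a. teq3 scale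
        (concat (map (\<lambda>(x,y). map (\<lambda>(u,v). (u, v, \<psi> y)) (D x)) (D a)))
        (concat (map (\<lambda>(x,y). map (\<lambda>(u,v). (\<omega> x, u, v)) (D y)) (D a))))"

definition infinitesimal_BiHom_bialgebra ::
  "('k::field \<Rightarrow> 'a::ab_group_add \<Rightarrow> 'a) \<Rightarrow> ('a \<Rightarrow> 'a \<Rightarrow> 'a) \<Rightarrow> ('a \<Rightarrow> ('a \<times> 'a) list) \<Rightarrow>
   ('a \<Rightarrow> 'a) \<Rightarrow> ('a \<Rightarrow> 'a) \<Rightarrow> ('a \<Rightarrow> 'a) \<Rightarrow> ('a \<Rightarrow> 'a) \<Rightarrow> bool" where
  "infinitesimal_BiHom_bialgebra scale m D \<alpha> \<beta> \<psi> \<omega> \<longleftrightarrow>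
     BiHom_assoc_algebra scale m \<alpha> \<beta> \<and>
     BiHom_coassoc_coalgebra scale D \<psi> \<omega> \<and>
     (\<forall>a b. teq2 scale (D (m a b))
        (map (\<lambda>(x,y). (m (\<omega> a) x, \<beta> y)) (D b) @
         map (\<lambda>(x,y). (\<alpha> x, m y (\<psi> b))) (D a))) \<and>
     \<alpha> \<circ> \<psi> = \<psi> \<circ> \<alpha> \<and> \<alpha> \<circ> \<omega> = \<omega> \<circ> \<alpha> \<and>
     \<beta> \<circ> \<psi> = \<psi> \<circ> \<beta> \<and> \<beta> \<circ> \<omega> = \<omega> \<circ> \<beta> \<and>
     (\<forall>a. teq2 scale (tmap2 \<alpha> \<alpha> (D a)) (D (\<alpha> a))) \<and>
     (\<forall>a. teq2 scale (tmap2 \<beta> \<beta> (D a)) (D (\<beta> a))) \<and>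
     (\<forall>x y. \<psi> (m x y) = m (\<psi> x) (\<psi> y)) \<and>
     (\<forall>x y. \<omega> (m x y) = m (\<omega> x) (\<omega> y))"

definition left_BiHom_preLie ::
  "('k::field \<Rightarrow> 'a::ab_group_add \<Rightarrow> 'a) \<Rightarrow> ('a \<Rightarrow> 'a \<Rightarrow> 'a) \<Rightarrow> ('a \<Rightarrow> 'a) \<Rightarrow> ('a \<Rightarrow> 'a) \<Rightarrow> bool" where
  "left_BiHom_preLie scale m \<alpha> \<beta> \<longleftrightarrow>
     vector_space scale \<and> bilin_map scale m \<and> lin scale \<alpha> \<and> lin scale \<beta> \<and>
     \<alpha> \<circ> \<beta> = \<beta> \<circ> \<alpha> \<and>
     (\<forall>x y. \<alpha> (m x y) = m (\<alpha> x) (\<alpha> y)) \<and>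
     (\<forall>x y. \<beta> (m x y) = m (\<beta> x) (\<beta> y)) \<and>
     (\<forall>x y z. m (\<alpha> (\<beta> x)) (m (\<alpha> y) z) - m (m (\<beta> x) (\<alpha> y)) (\<beta> z)
            = m (\<alpha> (\<beta> y)) (m (\<alpha> x) z) - m (m (\<beta> y) (\<alpha> x)) (\<beta> z))"

definition star_prod ::
  "('a::ab_group_add \<Rightarrow> 'a \<Rightarrow> 'a) \<Rightarrow> ('a \<Rightarrow> ('a \<times> 'a) list) \<Rightarrow>
   ('a \<Rightarrow> 'a) \<Rightarrow> ('a \<Rightarrow> 'a) \<Rightarrow> ('a \<Rightarrow> 'a) \<Rightarrow> ('a \<Rightarrow> 'a) \<Rightarrow> 'a \<Rightarrow> 'a \<Rightarrow> 'a" where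
  "star_prod m D \<alpha> \<beta> \<psi> \<omega> a b =
     (\<Sum>(x,y)\<leftarrow>D b. m (\<alpha> (\<beta> (\<beta> (\<psi> x)))) (m (\<alpha> a) (\<alpha> (\<alpha> (\<omega> y)))))"

end

theory Submission imports Defs begin

definition ev :: "('a \<Rightarrow> 'a \<Rightarrow> 'b::comm_monoid_add) \<Rightarrow> ('a \<times> 'a) list \<Rightarrow> 'b" where
  "ev F s = (\<Sum>(x,y)\<leftarrow>s. F x y)"

definition ev3 :: "('a \<Rightarrow> 'a \<Rightarrow> 'a \<Rightarrow> 'b::comm_monoid_add) \<Rightarrow> ('a \<times> 'a \<times> 'a) list \<Rightarrow> 'b" where
  "ev3 F s = (\<Sum>(x,y,z)\<leftarrow>s. F x y z)"

lemma ev_Nil[simp]: "ev F [] = 0" by (simp add: ev_def)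
lemma ev_Cons[simp]: "ev F ((x,y)#s) = F x y + ev F s" by (simp add: ev_def)
lemma ev_append[simp]: "ev F (s @ t) = ev F s + ev F t" by (simp add: ev_def)
lemma ev_map2: "ev F (map (\<lambda>(u,v). (f u, g v)) s) = ev (\<lambda>u v. F (f u) (g v)) s"
  by (induction s) auto
lemma ev_tmap2: "ev F (tmap2 f g s) = ev (\<lambda>u v. F (f u) (g v)) s"
  by (simp add: tmap2_def ev_map2)
lemma ev_add: "ev (\<lambda>u v. F u v + G u v) s = ev F s + ev G s"
  by (induction s) (auto simp: algebra_simps)
lemma ev_zero: "ev (\<lambda>u v. 0) s = 0"
  by (induction s) auto
lemma ev_cong: "(\<And>u v. F u v = G u v) \<Longrightarrow> ev F s = ev G s"
  by (simp add: ev_def)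
lemma ev_hom:
  assumes "\<And>a b. f (a + b) = f a + f b" "f 0 = 0"
  shows "f (ev F s) = ev (\<lambda>u v. f (F u v)) s"
  by (induction s) (auto simp: assms)

lemma ev3_concat:
  "ev3 F (concat (map (\<lambda>(x,y). map (\<lambda>(u,v). (u, v, h y)) (D x)) s))
   = ev (\<lambda>x y. ev (\<lambda>u v. F u v (h y)) (D x)) s"
proof (induction s)
  case Nil then show ?case by (simp add: ev3_def)
next
  case (Cons p s)
  obtain x y where p: "p = (x,y)" by (cases p)
  have "ev3 F (map (\<lambda>(u,v). (u, v, h y)) l) = ev (\<lambda>u v. F u v (h y)) l" for l
    by (induction l) (auto simp: ev3_def)
  then show ?case using Cons by (simp add: p ev3_def)
qed

lemma ev3_concat2:
  "ev3 F (concat (map (\<lambda>(x,y). map (\<lambda>(u,v). (h x, u, v)) (D y)) s))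
   = ev (\<lambda>x y. ev (\<lambda>u v. F (h x) u v) (D y)) s"
proof (induction s)
  case Nil then show ?case by (simp add: ev3_def)
next
  case (Cons p s)
  obtain x y where p: "p = (x,y)" by (cases p)
  have "ev3 F (map (\<lambda>(u,v). (h x, u, v)) l) = ev (\<lambda>u v. F (h x) u v) l" for l
    by (induction l) (auto simp: ev3_def)
  then show ?case using Cons by (simp add: p ev3_def)
qed

lemma ev3_hom:
  assumes "\<And>a b. f (a + b) = f a + f b" "f 0 = 0"
  shows "f (ev3 F s) = ev3 (\<lambda>u v w. f (F u v w)) s"
  by (induction s) (auto simp: assms ev3_def)

lemma vs_field: "vector_space ((*) :: 'k::field \<Rightarrow> 'k \<Rightarrow> 'k)"
  by (unfold_locales) (auto simp: algebra_simps)

lemma separation: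
  fixes scale :: "'k::field \<Rightarrow> 'a::ab_group_add \<Rightarrow> 'a"
  assumes vs: "vector_space scale"
    and h: "\<And>f. lin_form scale f \<Longrightarrow> f a = f b"
  shows "a = b"
proof (rule ccontr)
  assume ne: "a \<noteq> b"
  interpret vp: vector_space_pair scale "(*) :: 'k \<Rightarrow> 'k \<Rightarrow> 'k"
    using vs vs_field by (simp add: vector_space_pair_def)
  have "\<not> vp.vs1.dependent {a - b}" using ne by simp
  then obtain g where g: "Vector_Spaces.linear scale (*) g" "g (a - b) = 1"
    using vp.linear_independent_extend[of "{a - b}" "\<lambda>_. 1"] by auto
  have "g (a - b) = g a - g b"
  proof -
    have "g ((a - b) + b) = g (a - b) + g b" using g(1) unfolding Vector_Spaces.linear_iff by (elim conjE) (erule allE, erule allE, assumption)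
    then show ?thesis by simp
  qed
  moreover have "g a = g b" using h g(1) by (simp add: lin_form_def)
  ultimately show False using g(2) by simp
qed

locale ibb =
  fixes scale :: "'k::field \<Rightarrow> 'a::ab_group_add \<Rightarrow> 'a"
    and m :: "'a \<Rightarrow> 'a \<Rightarrow> 'a" and D :: "'a \<Rightarrow> ('a \<times> 'a) list"
    and \<alpha> \<beta> \<psi> \<omega> :: "'a \<Rightarrow> 'a"
  assumes ax: "infinitesimal_BiHom_bialgebra scale m D \<alpha> \<beta> \<psi> \<omega>"
begin

definition L :: "('a \<Rightarrow> 'a) \<Rightarrow> bool" where
  "L f \<longleftrightarrow> (\<forall>x y. f (x + y) = f x + f y) \<and> (\<forall>c x. f (scale c x) = scale c (f x))"

definition B :: "('a \<Rightarrow> 'a \<Rightarrow> 'a) \<Rightarrow> bool" where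
  "B F \<longleftrightarrow> (\<forall>x. L (F x)) \<and> (\<forall>y. L (\<lambda>x. F x y))"

definition Tri :: "('a \<Rightarrow> 'a \<Rightarrow> 'a \<Rightarrow> 'a) \<Rightarrow> bool" where
  "Tri F \<longleftrightarrow> (\<forall>y z. L (\<lambda>x. F x y z)) \<and> (\<forall>x z. L (\<lambda>y. F x y z)) \<and> (\<forall>x y. L (\<lambda>z. F x y z))"

lemma VS: "vector_space scale"
  using ax by (simp add: infinitesimal_BiHom_bialgebra_def BiHom_assoc_algebra_def)

lemma lin_L: "lin scale f \<longleftrightarrow> L f"
  using VS by (simp add: lin_def L_def Vector_Spaces.linear_iff)

lemma L_add: "L f \<Longrightarrow> f (x + y) = f x + f y" by (simp add: L_def)
lemma L_scale: "L f \<Longrightarrow> f (scale c x) = scale c (f x)" by (simp add: L_def)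
lemma L_zero: "L f \<Longrightarrow> f 0 = 0"
proof -
  assume "L f"
  then have "f (0 + 0) = f 0 + f 0" by (rule L_add)
  then show ?thesis by simp
qed

lemma scale_add: "scale c (x + y) = scale c x + scale c y"
  using VS by (simp add: vector_space_def)
lemma scale_zero: "scale c 0 = 0"
proof -
  have "scale c (0 + 0) = scale c 0 + scale c 0" by (rule scale_add)
  then show ?thesis by simp
qed

lemma scale_ev: "scale c (ev F s) = ev (\<lambda>u v. scale c (F u v)) s"
  by (rule ev_hom) (auto simp: scale_add scale_zero)

lemma lin_form_add: "lin_form scale f \<Longrightarrow> f (x + y) = f x + f y"
  unfolding lin_form_def Vector_Spaces.linear_iff by blast
lemma lin_form_scale: "lin_form scale f \<Longrightarrow> f (scale c x) = c * f x"
  unfolding lin_form_def Vector_Spaces.linear_iff by blast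
lemma lin_form_zero: "lin_form scale f \<Longrightarrow> f 0 = 0"
proof -
  assume a: "lin_form scale f"
  have "f (0 + 0) = f 0 + f 0" by (rule lin_form_add[OF a])
  then have "f 0 = f 0 + f 0" by simp
  then show ?thesis by (metis add_cancel_right_right)
qed

lemma lin_form_comp: "lin_form scale f \<Longrightarrow> L g \<Longrightarrow> lin_form scale (\<lambda>x. f (g x))"
  unfolding lin_form_def Vector_Spaces.linear_iff
  using VS vs_field by (simp add: L_def)

lemma T2:
  assumes "teq2 scale s t" "B F"
  shows "ev F s = ev F t"
proof (rule separation[OF VS])
  fix f :: "'a \<Rightarrow> 'k" assume f: "lin_form scale f"
  have e: "f (ev F r) = ev (\<lambda>u v. f (F u v)) r" for r
    by (rule ev_hom) (auto simp: lin_form_add[OF f] lin_form_zero[OF f])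
  have "bilin_form scale (\<lambda>u v. f (F u v))"
    unfolding bilin_form_def
  proof (intro conjI allI)
    fix x y
    show "lin_form scale (\<lambda>y. f (F x y))" using lin_form_comp[OF f, of "F x"] assms(2) B_def by simp
    show "lin_form scale (\<lambda>x. f (F x y))" using lin_form_comp[OF f, of "\<lambda>x. F x y"] assms(2) B_def by simp
  qed
  then have "ev (\<lambda>u v. f (F u v)) s = ev (\<lambda>u v. f (F u v)) t"
    using assms(1) by (simp add: teq2_def ev_def)
  then show "f (ev F s) = f (ev F t)" by (simp add: e)
qed

lemma T3:
  assumes "teq3 scale s t" "Tri F"
  shows "ev3 F s = ev3 F t"
proof (rule separation[OF VS])
  fix f :: "'a \<Rightarrow> 'k" assume f: "lin_form scale f"
  have e: "f (ev3 F r) = ev3 (\<lambda>u v w. f (F u v w)) r" for r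
    by (rule ev3_hom) (auto simp: lin_form_add[OF f] lin_form_zero[OF f])
  have "trilin_form scale (\<lambda>u v w. f (F u v w))"
    unfolding trilin_form_def
  proof (intro conjI allI)
    fix x y z
    show "lin_form scale (\<lambda>x. f (F x y z))" using lin_form_comp[OF f, of "\<lambda>x. F x y z"] assms(2) Tri_def by simp
    show "lin_form scale (\<lambda>y. f (F x y z))" using lin_form_comp[OF f, of "\<lambda>y. F x y z"] assms(2) Tri_def by simp
    show "lin_form scale (\<lambda>z. f (F x y z))" using lin_form_comp[OF f, of "F x y"] assms(2) Tri_def by simp
  qed
  then have "ev3 (\<lambda>u v w. f (F u v w)) s = ev3 (\<lambda>u v w. f (F u v w)) t"
    using assms(1) by (simp add: teq3_def ev3_def)
  then show "f (ev3 F s) = f (ev3 F t)" by (simp add: e)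
qed

lemmas defs_all = infinitesimal_BiHom_bialgebra_def BiHom_assoc_algebra_def BiHom_coassoc_coalgebra_def bilin_map_def

lemma L_\<alpha>[simp]: "L \<alpha>" and L_\<beta>[simp]: "L \<beta>" and L_\<psi>[simp]: "L \<psi>" and L_\<omega>[simp]: "L \<omega>"
  using ax by (simp_all add: defs_all lin_L)
lemma L_m1[simp]: "L (m c)" and L_m2: "L (\<lambda>x. m x c)"
  using ax by (simp_all add: defs_all lin_L)

lemma comm_rules[simp]:
  "\<beta> (\<alpha> x) = \<alpha> (\<beta> x)" "\<psi> (\<alpha> x) = \<alpha> (\<psi> x)" "\<omega> (\<alpha> x) = \<alpha> (\<omega> x)"
  "\<psi> (\<beta> x) = \<beta> (\<psi> x)" "\<omega> (\<beta> x) = \<beta> (\<omega> x)" "\<omega> (\<psi> x) = \<psi> (\<omega> x)"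
  using ax unfolding defs_all by (metis comp_apply)+

lemma mult_rules[simp]:
  "\<alpha> (m x y) = m (\<alpha> x) (\<alpha> y)" "\<beta> (m x y) = m (\<beta> x) (\<beta> y)"
  "\<psi> (m x y) = m (\<psi> x) (\<psi> y)" "\<omega> (m x y) = m (\<omega> x) (\<omega> y)"
  using ax unfolding defs_all by blast+

lemma assoc: "m (\<alpha> x) (m y z) = m (m x y) (\<beta> z)"
  using ax unfolding defs_all by blast

lemma L_id[simp]: "L (\<lambda>x. x)" by (simp add: L_def)
lemma L_comp[simp]:
  "L f \<Longrightarrow> L (\<lambda>x. \<alpha> (f x))" "L f \<Longrightarrow> L (\<lambda>x. \<beta> (f x))"
  "L f \<Longrightarrow> L (\<lambda>x. \<psi> (f x))" "L f \<Longrightarrow> L (\<lambda>x. \<omega> (f x))"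
  using L_\<alpha> L_\<beta> L_\<psi> L_\<omega> by (simp_all add: L_def)
lemma L_mL[simp]: "L f \<Longrightarrow> L (\<lambda>x. m (f x) c)"
  using L_m2[of c] by (simp add: L_def)
lemma L_mR[simp]: "L f \<Longrightarrow> L (\<lambda>x. m c (f x))"
  using L_m1[of c] by (simp add: L_def)
lemma L_plus[simp]: "L f \<Longrightarrow> L g \<Longrightarrow> L (\<lambda>x. f x + g x)"
  by (simp add: L_def scale_add algebra_simps)
lemma L_ev[simp]: "(\<And>u v. L (\<lambda>x. G u v x)) \<Longrightarrow> L (\<lambda>x. ev (\<lambda>u v. G u v x) s)"
proof -
  assume a: "\<And>u v. L (\<lambda>x. G u v x)"
  have "\<forall>x y. ev (\<lambda>u v. G u v (x + y)) s = ev (\<lambda>u v. G u v x) s + ev (\<lambda>u v. G u v y) s"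
    using a by (simp add: L_add ev_add)
  moreover have "\<forall>c x. ev (\<lambda>u v. G u v (scale c x)) s = scale c (ev (\<lambda>u v. G u v x) s)"
    using a by (simp add: L_scale scale_ev)
  ultimately show ?thesis by (simp add: L_def)
qed

lemma B_iff[simp]: "B F \<longleftrightarrow> (\<forall>x. L (\<lambda>y. F x y)) \<and> (\<forall>y. L (\<lambda>x. F x y))"
  by (simp add: B_def)
lemma Tri_iff[simp]: "Tri F \<longleftrightarrow> (\<forall>y z. L (\<lambda>x. F x y z)) \<and> (\<forall>x z. L (\<lambda>y. F x y z)) \<and> (\<forall>x y. L (\<lambda>z. F x y z))"
  by (simp add: Tri_def)

lemma evD_lin:
  assumes "B F"
  shows "ev F (D (scale c x + y)) = scale c (ev F (D x)) + ev F (D y)"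
proof -
  have "teq2 scale (D (scale c x + y)) (map (\<lambda>(u,v). (scale c u, v)) (D x) @ D y)"
    using ax unfolding defs_all lin_comult_def by blast
  then have "ev F (D (scale c x + y)) = ev F (map (\<lambda>(u,v). (scale c u, v)) (D x)) + ev F (D y)"
    using T2 assms by simp
  also have "ev F (map (\<lambda>(u,v). (scale c u, v)) (D x)) = ev (\<lambda>u v. F (scale c u) v) (D x)"
    using ev_map2[of F "scale c" "\<lambda>v. v"] by simp
  also have "\<dots> = ev (\<lambda>u v. scale c (F u v)) (D x)"
  proof (rule ev_cong)
    fix u v show "F (scale c u) v = scale c (F u v)" using L_scale[of "\<lambda>x. F x v"] assms by simp
  qed
  also have "\<dots> = scale c (ev F (D x))"
    by (simp add: scale_ev)
  finally show ?thesis .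
qed

lemma scale_one: "scale 1 x = x" using VS by (simp add: vector_space_def)

lemma evD_add: "B F \<Longrightarrow> ev F (D (x + y)) = ev F (D x) + ev F (D y)"
  using evD_lin[of F 1 x y] by (simp add: scale_one)

lemma evD_zero: "B F \<Longrightarrow> ev F (D 0) = 0"
proof -
  assume "B F"
  then have "ev F (D (0 + 0)) = ev F (D 0) + ev F (D 0)" by (rule evD_add)
  then have "ev F (D 0) = ev F (D 0) + ev F (D 0)" by simp
  then show ?thesis by (metis add_cancel_right_right)
qed

lemma evD_sum: "B F \<Longrightarrow> ev F (D (ev G s)) = ev (\<lambda>a b. ev F (D (G a b))) s"
  by (induction s) (auto simp: evD_zero evD_add)

lemma D_comp:
  "B F \<Longrightarrow> ev F (D (\<alpha> b)) = ev (\<lambda>u v. F (\<alpha> u) (\<alpha> v)) (D b)"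
  "B F \<Longrightarrow> ev F (D (\<beta> b)) = ev (\<lambda>u v. F (\<beta> u) (\<beta> v)) (D b)"
  "B F \<Longrightarrow> ev F (D (\<psi> b)) = ev (\<lambda>u v. F (\<psi> u) (\<psi> v)) (D b)"
  "B F \<Longrightarrow> ev F (D (\<omega> b)) = ev (\<lambda>u v. F (\<omega> u) (\<omega> v)) (D b)"
proof -
  have t: "teq2 scale (tmap2 \<alpha> \<alpha> (D b)) (D (\<alpha> b))" "teq2 scale (tmap2 \<beta> \<beta> (D b)) (D (\<beta> b))"
    "teq2 scale (tmap2 \<psi> \<psi> (D b)) (D (\<psi> b))" "teq2 scale (tmap2 \<omega> \<omega> (D b)) (D (\<omega> b))"
    using ax unfolding defs_all by blast+
  assume "B F"
  with t show "ev F (D (\<alpha> b)) = ev (\<lambda>u v. F (\<alpha> u) (\<alpha> v)) (D b)"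
    "ev F (D (\<beta> b)) = ev (\<lambda>u v. F (\<beta> u) (\<beta> v)) (D b)"
    "ev F (D (\<psi> b)) = ev (\<lambda>u v. F (\<psi> u) (\<psi> v)) (D b)"
    "ev F (D (\<omega> b)) = ev (\<lambda>u v. F (\<omega> u) (\<omega> v)) (D b)"
    using T2 by (metis ev_tmap2)+
qed

lemma D_m: "B F \<Longrightarrow> ev F (D (m a b)) =
   ev (\<lambda>x y. F (m (\<omega> a) x) (\<beta> y)) (D b) + ev (\<lambda>x y. F (\<alpha> x) (m y (\<psi> b))) (D a)"
proof -
  assume "B F"
  moreover have "teq2 scale (D (m a b))
        (map (\<lambda>(x,y). (m (\<omega> a) x, \<beta> y)) (D b) @ map (\<lambda>(x,y). (\<alpha> x, m y (\<psi> b))) (D a))"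
    using ax unfolding defs_all by blast
  ultimately show ?thesis using T2 by (simp add: ev_map2)
qed

lemma coassoc:
  assumes "Tri F"
  shows "ev (\<lambda>x y. ev (\<lambda>u v. F u v (\<psi> y)) (D x)) (D a) = ev (\<lambda>x y. ev (\<lambda>u v. F (\<omega> x) u v) (D y)) (D a)"
proof -
  have "teq3 scale
        (concat (map (\<lambda>(x,y). map (\<lambda>(u,v). (u, v, \<psi> y)) (D x)) (D a)))
        (concat (map (\<lambda>(x,y). map (\<lambda>(u,v). (\<omega> x, u, v)) (D y)) (D a)))"
    using ax unfolding defs_all by blast
  from T3[OF this assms] show ?thesis by (simp only: ev3_concat ev3_concat2)
qed

lemma L_ev_hom: "L f \<Longrightarrow> f (ev F s) = ev (\<lambda>u v. f (F u v)) s"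
  by (rule ev_hom) (auto simp: L_add L_zero)

lemma hom_rules[simp]:
  "\<alpha> (ev F s) = ev (\<lambda>u v. \<alpha> (F u v)) s" "\<beta> (ev F s) = ev (\<lambda>u v. \<beta> (F u v)) s"
  "\<psi> (ev F s) = ev (\<lambda>u v. \<psi> (F u v)) s" "\<omega> (ev F s) = ev (\<lambda>u v. \<omega> (F u v)) s"
  "m c (ev F s) = ev (\<lambda>u v. m c (F u v)) s" "m (ev F s) c = ev (\<lambda>u v. m (F u v) c) s"
  by (rule L_ev_hom; simp add: L_m2)+

definition star where
  "star a b = ev (\<lambda>x y. m (\<alpha> (\<beta> (\<beta> (\<psi> x)))) (m (\<alpha> a) (\<alpha> (\<alpha> (\<omega> y))))) (D b)"

lemmas Drules = D_comp D_m evD_sum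



lemma id1: "m (m p (m q s)) (m (\<beta> (\<beta> t)) (\<beta> (\<beta> w))) = m (\<alpha> p) (m (\<alpha> q) (m s (m t w)))"
proof -
  have 1: "m (m q s) (\<beta> (m t w)) = m (\<alpha> q) (m s (m t w))" by (rule assoc[symmetric])
  have 2: "m (m p (m q s)) (\<beta> (\<beta> (m t w))) = m (\<alpha> p) (m (m q s) (\<beta> (m t w)))" by (rule assoc[symmetric])
  show ?thesis using 1 2 by simp
qed

lemma id2: "m (m a (\<alpha> u)) (m (\<alpha> (\<beta> c)) (m (\<beta> d) (\<beta> e))) = m (\<alpha> a) (m (m u (m c d)) (\<beta> (\<beta> e)))"
proof -
  have 3: "m (m a (\<alpha> u)) (\<beta> (m (\<alpha> c) (m d e))) = m (\<alpha> a) (m (\<alpha> u) (m (\<alpha> c) (m d e)))" by (rule assoc[symmetric])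
  have 4: "m (\<alpha> c) (m d e) = m (m c d) (\<beta> e)" by (rule assoc)
  have 5: "m (\<alpha> u) (m (m c d) (\<beta> e)) = m (m u (m c d)) (\<beta> (\<beta> e))" by (rule assoc)
  have "m (m a (\<alpha> u)) (m (\<alpha> (\<beta> c)) (m (\<beta> d) (\<beta> e))) = m (m a (\<alpha> u)) (\<beta> (m (\<alpha> c) (m d e)))" by simp
  also have "\<dots> = m (\<alpha> a) (m (\<alpha> u) (m (\<alpha> c) (m d e)))" by (rule 3)
  also have "\<dots> = m (\<alpha> a) (m (\<alpha> u) (m (m c d) (\<beta> e)))" by (simp only: 4)
  also have "\<dots> = m (\<alpha> a) (m (m u (m c d)) (\<beta> (\<beta> e)))" by (simp only: 5)
  finally show ?thesis .
qed

definition e1 where "e1 x y z = ev (\<lambda>a b. ev (\<lambda>u v. (m (m (\<alpha> (\<alpha> (\<beta> (\<beta> (\<beta> (\<beta> (\<psi> (\<psi> (\<omega> a))))))))) (m (\<alpha> (\<alpha> (\<alpha> (\<alpha> (\<beta> (\<beta> (\<beta> (\<psi> (\<omega> y))))))))) (\<alpha> (\<alpha> (\<alpha> (\<beta> (\<beta> (\<psi> (\<omega> u))))))))) (m (\<alpha> (\<alpha> (\<alpha> (\<alpha> (\<alpha> (\<beta> (\<beta> (\<beta> (\<psi> (\<omega> x)))))))))) (\<alpha> (\<alpha> (\<alpha> (\<alpha> (\<beta> (\<beta> (\<omega> (\<omega> v))))))))))) (D b)) (D z)"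
definition e3 where "e3 x y z = ev (\<lambda>a b. ev (\<lambda>u v. (m (\<alpha> (\<alpha> (\<alpha> (\<beta> (\<beta> (\<beta> (\<beta> (\<psi> (\<psi> u))))))))) (m (\<alpha> (\<alpha> (\<alpha> (\<alpha> (\<alpha> (\<beta> (\<beta> (\<beta> (\<psi> (\<omega> x)))))))))) (m (\<alpha> (\<alpha> (\<alpha> (\<beta> (\<beta> (\<psi> (\<omega> v))))))) (m (\<alpha> (\<alpha> (\<alpha> (\<alpha> (\<alpha> (\<beta> (\<psi> (\<omega> y)))))))) (\<alpha> (\<alpha> (\<alpha> (\<alpha> (\<psi> (\<omega> (\<omega> b)))))))))))) (D a)) (D z)"

lemma key: "(star (\<alpha> (\<alpha> (\<alpha> (\<alpha> (\<beta> (\<beta> (\<beta> (\<psi> (\<omega> x))))))))) (star (\<alpha> (\<alpha> (\<beta> y))) z) - star (star (\<alpha> (\<alpha> (\<beta> (\<beta> (\<psi> (\<omega> x)))))) (\<alpha> (\<alpha> (\<beta> y)))) (\<alpha> (\<alpha> (\<beta> (\<beta> (\<psi> (\<omega> z))))))) = e1 x y z + e3 x y z"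
proof -
  have T1: "star (\<alpha> (\<alpha> (\<alpha> (\<alpha> (\<beta> (\<beta> (\<beta> (\<psi> (\<omega> x))))))))) (star (\<alpha> (\<alpha> (\<beta> y))) z) = ev (\<lambda>a b. ev (\<lambda>u v. (m (m (\<alpha> (\<alpha> (\<beta> (\<beta> (\<beta> (\<beta> (\<psi> (\<psi> (\<omega> a))))))))) (m (\<alpha> (\<alpha> (\<alpha> (\<alpha> (\<beta> (\<beta> (\<beta> (\<psi> (\<omega> y))))))))) (\<alpha> (\<alpha> (\<alpha> (\<beta> (\<beta> (\<psi> (\<omega> u))))))))) (m (\<alpha> (\<alpha> (\<alpha> (\<alpha> (\<alpha> (\<beta> (\<beta> (\<beta> (\<psi> (\<omega> x)))))))))) (\<alpha> (\<alpha> (\<alpha> (\<alpha> (\<beta> (\<beta> (\<omega> (\<omega> v))))))))))) (D b)) (D z)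
     + ev (\<lambda>a b. ev (\<lambda>u v. (m (m (\<alpha> (\<alpha> (\<beta> (\<beta> (\<beta> (\<beta> (\<psi> (\<psi> (\<omega> a))))))))) (\<alpha> (\<alpha> (\<alpha> (\<alpha> (\<alpha> (\<beta> (\<beta> (\<beta> (\<psi> u)))))))))) (m (\<alpha> (\<alpha> (\<alpha> (\<alpha> (\<alpha> (\<beta> (\<beta> (\<beta> (\<psi> (\<omega> x)))))))))) (m (\<alpha> (\<alpha> (\<alpha> (\<alpha> (\<alpha> (\<beta> (\<beta> (\<omega> v)))))))) (\<alpha> (\<alpha> (\<alpha> (\<alpha> (\<beta> (\<psi> (\<omega> (\<omega> b)))))))))))) (D y)) (D z) + ev (\<lambda>a b. ev (\<lambda>u v. (m (\<alpha> (\<alpha> (\<alpha> (\<beta> (\<beta> (\<beta> (\<beta> (\<psi> (\<psi> u))))))))) (m (\<alpha> (\<alpha> (\<alpha> (\<alpha> (\<alpha> (\<beta> (\<beta> (\<beta> (\<psi> (\<omega> x)))))))))) (m (\<alpha> (\<alpha> (\<alpha> (\<beta> (\<beta> (\<psi> (\<omega> v))))))) (m (\<alpha> (\<alpha> (\<alpha> (\<alpha> (\<alpha> (\<beta> (\<psi> (\<omega> y)))))))) (\<alpha> (\<alpha> (\<alpha> (\<alpha> (\<psi> (\<omega> (\<omega> b)))))))))))) (D a)) (D z)"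
    by (simp add: star_def Drules ev_add)
  have W: "star (star (\<alpha> (\<alpha> (\<beta> (\<beta> (\<psi> (\<omega> x)))))) (\<alpha> (\<alpha> (\<beta> y)))) (\<alpha> (\<alpha> (\<beta> (\<beta> (\<psi> (\<omega> z)))))) = ev (\<lambda>a b. ev (\<lambda>u v. (m (\<alpha> (\<alpha> (\<alpha> (\<beta> (\<beta> (\<beta> (\<beta> (\<psi> (\<psi> (\<omega> a)))))))))) (m (m (\<alpha> (\<alpha> (\<alpha> (\<alpha> (\<beta> (\<beta> (\<beta> (\<psi> u)))))))) (m (\<alpha> (\<alpha> (\<alpha> (\<alpha> (\<beta> (\<beta> (\<psi> (\<omega> x)))))))) (\<alpha> (\<alpha> (\<alpha> (\<alpha> (\<alpha> (\<beta> (\<omega> v))))))))) (\<alpha> (\<alpha> (\<alpha> (\<alpha> (\<beta> (\<beta> (\<psi> (\<omega> (\<omega> b)))))))))))) (D y)) (D z)"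
    by (simp add: star_def Drules)
  have E2W: "(m (m (\<alpha> (\<alpha> (\<beta> (\<beta> (\<beta> (\<beta> (\<psi> (\<psi> (\<omega> a))))))))) (\<alpha> (\<alpha> (\<alpha> (\<alpha> (\<alpha> (\<beta> (\<beta> (\<beta> (\<psi> u)))))))))) (m (\<alpha> (\<alpha> (\<alpha> (\<alpha> (\<alpha> (\<beta> (\<beta> (\<beta> (\<psi> (\<omega> x)))))))))) (m (\<alpha> (\<alpha> (\<alpha> (\<alpha> (\<alpha> (\<beta> (\<beta> (\<omega> v)))))))) (\<alpha> (\<alpha> (\<alpha> (\<alpha> (\<beta> (\<psi> (\<omega> (\<omega> b))))))))))) = (m (\<alpha> (\<alpha> (\<alpha> (\<beta> (\<beta> (\<beta> (\<beta> (\<psi> (\<psi> (\<omega> a)))))))))) (m (m (\<alpha> (\<alpha> (\<alpha> (\<alpha> (\<beta> (\<beta> (\<beta> (\<psi> u)))))))) (m (\<alpha> (\<alpha> (\<alpha> (\<alpha> (\<beta> (\<beta> (\<psi> (\<omega> x)))))))) (\<alpha> (\<alpha> (\<alpha> (\<alpha> (\<alpha> (\<beta> (\<omega> v))))))))) (\<alpha> (\<alpha> (\<alpha> (\<alpha> (\<beta> (\<beta> (\<psi> (\<omega> (\<omega> b)))))))))))" for a b u v using id2[of "(\<alpha> (\<alpha> (\<beta> (\<beta> (\<beta> (\<beta> (\<psi> (\<psi> (\<omega> a)))))))))" "(\<alpha> (\<alpha> (\<alpha> (\<alpha> (\<beta> (\<beta> (\<beta> (\<psi> u))))))))" "(\<alpha>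 (\<alpha> (\<alpha> (\<alpha> (\<beta> (\<beta> (\<psi> (\<omega> x))))))))" "(\<alpha> (\<alpha> (\<alpha> (\<alpha> (\<alpha> (\<beta> (\<omega> v)))))))" "(\<alpha> (\<alpha> (\<alpha> (\<alpha> (\<psi> (\<omega> (\<omega> b)))))))"] by simp
  show ?thesis unfolding e1_def e3_def using T1 W E2W by simp
qed

lemma swap: "e1 x y z = e3 y x z"
proof -
  have c: "ev (\<lambda>a b. ev (\<lambda>u v. (m (m (\<alpha> (\<alpha> (\<beta> (\<beta> (\<beta> (\<beta> (\<psi> (\<psi> u)))))))) (m (\<alpha> (\<alpha> (\<alpha> (\<alpha> (\<beta> (\<beta> (\<beta> (\<psi> (\<omega> y))))))))) (\<alpha> (\<alpha> (\<alpha> (\<beta> (\<beta> (\<psi> (\<omega> v))))))))) (m (\<alpha> (\<alpha> (\<alpha> (\<alpha> (\<alpha> (\<beta> (\<beta> (\<beta> (\<psi> (\<omega> x)))))))))) (\<alpha> (\<alpha> (\<alpha> (\<alpha> (\<beta> (\<beta> (\<psi> (\<omega> (\<omega> b)))))))))))) (D a)) (D z) = ev (\<lambda>a b. ev (\<lambda>u v. (m (m (\<alpha> (\<alpha> (\<beta> (\<beta> (\<beta> (\<beta> (\<psi> (\<psi> (\<omega> a))))))))) (m (\<alpha> (\<alpha> (\<alpha> (\<alpha> (\<beta> (\<beta> (\<beta> (\<psi> (\<omega> y))))))))) (\<alpha> (\<alpha> (\<alpha> (\<beta> (\<beta> (\<psi> (\<omega> u))))))))) (m (\<alpha> (\<alpha>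 (\<alpha> (\<alpha> (\<alpha> (\<beta> (\<beta> (\<beta> (\<psi> (\<omega> x)))))))))) (\<alpha> (\<alpha> (\<alpha> (\<alpha> (\<beta> (\<beta> (\<omega> (\<omega> v))))))))))) (D b)) (D z)"
    using coassoc[of "\<lambda>p u v. (m (m (\<alpha> (\<alpha> (\<beta> (\<beta> (\<beta> (\<beta> (\<psi> (\<psi> p)))))))) (m (\<alpha> (\<alpha> (\<alpha> (\<alpha> (\<beta> (\<beta> (\<beta> (\<psi> (\<omega> y))))))))) (\<alpha> (\<alpha> (\<alpha> (\<beta> (\<beta> (\<psi> (\<omega> u))))))))) (m (\<alpha> (\<alpha> (\<alpha> (\<alpha> (\<alpha> (\<beta> (\<beta> (\<beta> (\<psi> (\<omega> x)))))))))) (\<alpha> (\<alpha> (\<alpha> (\<alpha> (\<beta> (\<beta> (\<omega> (\<omega> v))))))))))" z] by simp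
  have i: "(m (m (\<alpha> (\<alpha> (\<beta> (\<beta> (\<beta> (\<beta> (\<psi> (\<psi> u)))))))) (m (\<alpha> (\<alpha> (\<alpha> (\<alpha> (\<beta> (\<beta> (\<beta> (\<psi> (\<omega> y))))))))) (\<alpha> (\<alpha> (\<alpha> (\<beta> (\<beta> (\<psi> (\<omega> v))))))))) (m (\<alpha> (\<alpha> (\<alpha> (\<alpha> (\<alpha> (\<beta> (\<beta> (\<beta> (\<psi> (\<omega> x)))))))))) (\<alpha> (\<alpha> (\<alpha> (\<alpha> (\<beta> (\<beta> (\<psi> (\<omega> (\<omega> b))))))))))) = (m (\<alpha> (\<alpha> (\<alpha> (\<beta> (\<beta> (\<beta> (\<beta> (\<psi> (\<psi> u))))))))) (m (\<alpha> (\<alpha> (\<alpha> (\<alpha> (\<alpha> (\<beta> (\<beta> (\<beta> (\<psi> (\<omega> y)))))))))) (m (\<alpha> (\<alpha> (\<alpha> (\<beta> (\<beta> (\<psi> (\<omega> v))))))) (m (\<alpha> (\<alpha> (\<alpha> (\<alpha> (\<alpha> (\<beta> (\<psi> (\<omega> x)))))))) (\<alpha> (\<alpha> (\<alpha> (\<alpha> (\<psi> (\<omega> (\<omega> b)))))))))))" for a b u v using id1[of "(\<alpha> (\<alpha> (\<beta> (\<beta> (\<beta> (\<beta> (\<psi> (\<psi> u))))))))" "(\<alpha> (\<alpha> (\<alpha> (\<alpha> (\<beta> (\<beta> (\<beta> (\<psi> (\<omega> y)))))))))" "(\<alpha> (\<alpha> (\<alpha> (\<beta> (\<beta> (\<psi>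 (\<omega> v)))))))" "(\<alpha> (\<alpha> (\<alpha> (\<alpha> (\<alpha> (\<beta> (\<psi> (\<omega> x))))))))" "(\<alpha> (\<alpha> (\<alpha> (\<alpha> (\<psi> (\<omega> (\<omega> b)))))))"] by simp
  show ?thesis unfolding e1_def e3_def using c i by simp
qed

lemma preLie: "(star (\<alpha> (\<alpha> (\<alpha> (\<alpha> (\<beta> (\<beta> (\<beta> (\<psi> (\<omega> x))))))))) (star (\<alpha> (\<alpha> (\<beta> y))) z) - star (star (\<alpha> (\<alpha> (\<beta> (\<beta> (\<psi> (\<omega> x)))))) (\<alpha> (\<alpha> (\<beta> y)))) (\<alpha> (\<alpha> (\<beta> (\<beta> (\<psi> (\<omega> z))))))) = (star (\<alpha> (\<alpha> (\<alpha> (\<alpha> (\<beta> (\<beta> (\<beta> (\<psi> (\<omega> y))))))))) (star (\<alpha> (\<alpha> (\<beta> x))) z) - star (star (\<alpha> (\<alpha> (\<beta> (\<beta> (\<psi> (\<omega> y)))))) (\<alpha> (\<alpha> (\<beta> x)))) (\<alpha> (\<alpha> (\<beta> (\<beta> (\<psi> (\<omega> z)))))))"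
  by (simp add: key swap add.commute)


lemma L_evD[simp]: "B F \<Longrightarrow> L f \<Longrightarrow> L (\<lambda>x. ev F (D (f x)))"
proof -
  assume F: "B F" and f: "L f"
  have "ev F (D (f (x + y))) = ev F (D (f x)) + ev F (D (f y))" for x y
    using evD_add[OF F] L_add[OF f] by simp
  moreover have "ev F (D (f (scale c x))) = scale c (ev F (D (f x)))" for c x
    using evD_lin[OF F, of c "f x" 0] L_scale[OF f] evD_zero[OF F] by simp
  ultimately show ?thesis by (simp add: L_def)
qed

lemma final: "left_BiHom_preLie scale star (\<alpha> \<circ> \<alpha> \<circ> \<beta>) (\<alpha> \<circ> \<alpha> \<circ> \<beta> \<circ> \<beta> \<circ> \<psi> \<circ> \<omega>)"
  unfolding left_BiHom_preLie_def bilin_map_def lin_L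
proof (intro conjI allI)
  show "vector_space scale" by (rule VS)
  fix x y z
  show "L (star x)" unfolding star_def by simp
  show "L (\<lambda>a. star a y)" unfolding star_def by simp
  show "L (\<alpha> \<circ> \<alpha> \<circ> \<beta>)" by (simp add: comp_def)
  show "L (\<alpha> \<circ> \<alpha> \<circ> \<beta> \<circ> \<beta> \<circ> \<psi> \<circ> \<omega>)" by (simp add: comp_def)
  show "(\<alpha> \<circ> \<alpha> \<circ> \<beta>) \<circ> (\<alpha> \<circ> \<alpha> \<circ> \<beta> \<circ> \<beta> \<circ> \<psi> \<circ> \<omega>) = (\<alpha> \<circ> \<alpha> \<circ> \<beta> \<circ> \<beta> \<circ> \<psi> \<circ> \<omega>) \<circ> (\<alpha> \<circ> \<alpha> \<circ> \<beta>)"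
    by (simp add: comp_def)
  show "(\<alpha> \<circ> \<alpha> \<circ> \<beta>) (star x y) = star ((\<alpha> \<circ> \<alpha> \<circ> \<beta>) x) ((\<alpha> \<circ> \<alpha> \<circ> \<beta>) y)"
    by (simp add: comp_def star_def Drules)
  show "(\<alpha> \<circ> \<alpha> \<circ> \<beta> \<circ> \<beta> \<circ> \<psi> \<circ> \<omega>) (star x y) = star ((\<alpha> \<circ> \<alpha> \<circ> \<beta> \<circ> \<beta> \<circ> \<psi> \<circ> \<omega>) x) ((\<alpha> \<circ> \<alpha> \<circ> \<beta> \<circ> \<beta> \<circ> \<psi> \<circ> \<omega>) y)"
    by (simp add: comp_def star_def Drules)
  show "star ((\<alpha> \<circ> \<alpha> \<circ> \<beta>) ((\<alpha> \<circ> \<alpha> \<circ> \<beta> \<circ> \<beta> \<circ> \<psi> \<circ> \<omega>) x)) (star ((\<alpha> \<circ> \<alpha> \<circ> \<beta>) y) z) -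
    star (star ((\<alpha> \<circ> \<alpha> \<circ> \<beta> \<circ> \<beta> \<circ> \<psi> \<circ> \<omega>) x) ((\<alpha> \<circ> \<alpha> \<circ> \<beta>) y)) ((\<alpha> \<circ> \<alpha> \<circ> \<beta> \<circ> \<beta> \<circ> \<psi> \<circ> \<omega>) z) =
    star ((\<alpha> \<circ> \<alpha> \<circ> \<beta>) ((\<alpha> \<circ> \<alpha> \<circ> \<beta> \<circ> \<beta> \<circ> \<psi> \<circ> \<omega>) y)) (star ((\<alpha> \<circ> \<alpha> \<circ> \<beta>) x) z) -
    star (star ((\<alpha> \<circ> \<alpha> \<circ> \<beta> \<circ> \<beta> \<circ> \<psi> \<circ> \<omega>) y) ((\<alpha> \<circ> \<alpha> \<circ> \<beta>) x)) ((\<alpha> \<circ> \<alpha> \<circ> \<beta> \<circ> \<beta> \<circ> \<psi> \<circ> \<omega>) z)"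
    using preLie[of x y z] by (simp add: comp_def)
qed

lemma star_eq: "star_prod m D \<alpha> \<beta> \<psi> \<omega> = star"
  by (simp add: fun_eq_iff star_prod_def star_def ev_def)

end

theorem theorem4p6:
  fixes scale :: "'k::field \<Rightarrow> 'a::ab_group_add \<Rightarrow> 'a"
    and m :: "'a \<Rightarrow> 'a \<Rightarrow> 'a" and D :: "'a \<Rightarrow> ('a \<times> 'a) list"
    and \<alpha> \<beta> \<psi> \<omega> :: "'a \<Rightarrow> 'a"
  assumes "infinitesimal_BiHom_bialgebra scale m D \<alpha> \<beta> \<psi> \<omega>"
  shows "left_BiHom_preLie scale (star_prod m D \<alpha> \<beta> \<psi> \<omega>)
           (\<alpha> \<circ> \<alpha> \<circ> \<beta>) (\<alpha> \<circ> \<alpha> \<circ> \<beta> \<circ> \<beta> \<circ> \<psi> \<circ> \<omega>)"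
proof -
  interpret ibb scale m D \<alpha> \<beta> \<psi> \<omega> by unfold_locales (rule assms)
  show ?thesis unfolding star_eq by (rule final)
qed

end
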